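(* Let $A$ be a noetherian commutative $\mathbb{N}$-graded ring, $\mathfrak m=A_+=\bigoplus_{\nu>0}A_\nu$, and $I=(a_1,\dots,a_n)$ an ideal of $A$ with $\sqrt I=\sqrt{\mathfrak m}$. Suppose $\sigma:=\mathrm{depth}_{\mathfrak m}(A)\ge1$. Then $H_i(\mathcal Z_\bullet)=0$ for all $i\ge\max(1,n-\sigma)$, where $\mathcal Z_\bullet$ is the approximation complex associated to $a_1,\dots,a_n$. In particular, if $n\ge2$ and $\mathrm{depth}_{\mathfrak m}(A)\ge n-1$, then $\mathcal Z_\bullet$ is acyclic (i.e. $H_i(\mathcal Z_\bullet)=0$ for all $i\ge1$).
   Context: Approximation complex: let $A[\mathbf T]=A[T_1,\dots,T_n]$. Let $K_\bullet(\mathbf a;A)$ be the Koszul complex of $a_1,\dots,a_n$, $K_i=\wedge^iA^n$, with differential $d_{\mathbf a}$, and $Z_i=\ker(d_{\mathbf a}:K_i\to K_{i-1})$. Let $d_{\mathbf T}$ be the Koszul differential of $T_1,\dots,T_n$ on $K_\bullet\otimes_AA[\mathbf T]$; since $d_{\mathbf a}d_{\mathbf T}+d_{\mathbf T}d_{\mathbf a}=0$, $d_{\mathbf T}$ restricts to a complex $\mathcal{Z}_\bullet$ with $\mathcal{Z}_i=Z_i\otimes_AA[\mathbf T]$. $\mathrm{depth}_{\mathfrak a}(A)$ denotes the grade of the ideal $\mathfrak a$ on $A$. *)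

theory Defs
  imports Main "HOL-Library.Extended_Nat"
begin

definition is_ideal :: "'a::comm_ring_1 set \<Rightarrow> bool" where
  "is_ideal J \<longleftrightarrow> 0 \<in> J \<and> (\<forall>x\<in>J. \<forall>y\<in>J. x + y \<in> J) \<and> (\<forall>r. \<forall>x\<in>J. r * x \<in> J)"

definition ideal_gen :: "'a::comm_ring_1 set \<Rightarrow> 'a set" where
  "ideal_gen F = \<Inter>{J. is_ideal J \<and> F \<subseteq> J}"

definition noetherian_ring :: "'a::comm_ring_1 itself \<Rightarrow> bool" where
  "noetherian_ring _ \<longleftrightarrow> (\<forall>J::'a set. is_ideal J \<longrightarrow> (\<exists>F. finite F \<and> J = ideal_gen F))"

definition radical :: "'a::comm_ring_1 set \<Rightarrow> 'a set" where
  "radical J = {x. \<exists>k::nat. x ^ k \<in> J}"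

text \<open>G nu is the homogeneous component of degree nu; A is the internal direct sum.\<close>
definition nat_graded :: "(nat \<Rightarrow> 'a::comm_ring_1 set) \<Rightarrow> bool" where
  "nat_graded G \<longleftrightarrow>
     (\<forall>\<nu>. 0 \<in> G \<nu> \<and> (\<forall>x\<in>G \<nu>. \<forall>y\<in>G \<nu>. x + y \<in> G \<nu>) \<and> (\<forall>x\<in>G \<nu>. - x \<in> G \<nu>)) \<and>
     1 \<in> G 0 \<and>
     (\<forall>\<mu> \<nu>. \<forall>x\<in>G \<mu>. \<forall>y\<in>G \<nu>. x * y \<in> G (\<mu> + \<nu>)) \<and>
     (\<forall>x. \<exists>c. finite {\<nu>. c \<nu> \<noteq> 0} \<and> (\<forall>\<nu>. c \<nu> \<in> G \<nu>) \<and> x = sum c {\<nu>. c \<nu> \<noteq> 0}) \<and>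
     (\<forall>c. finite {\<nu>. c \<nu> \<noteq> 0} \<and> (\<forall>\<nu>. c \<nu> \<in> G \<nu>) \<and> sum c {\<nu>. c \<nu> \<noteq> 0} = 0 \<longrightarrow> (\<forall>\<nu>. c \<nu> = 0))"

definition irrelevant_ideal :: "(nat \<Rightarrow> 'a::comm_ring_1 set) \<Rightarrow> 'a set" where
  "irrelevant_ideal G = {x. \<exists>c. finite {\<nu>. c \<nu> \<noteq> 0} \<and> (\<forall>\<nu>. c \<nu> \<in> G \<nu>) \<and> c 0 = 0 \<and>
                               x = sum c {\<nu>. c \<nu> \<noteq> 0}}"

definition regular_seq :: "'a::comm_ring_1 list \<Rightarrow> bool" where
  "regular_seq xs \<longleftrightarrow>
     (\<forall>i<length xs. \<forall>y. xs ! i * y \<in> ideal_gen (set (take i xs)) \<longrightarrow> y \<in> ideal_gen (set (take i xs)))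
     \<and> ideal_gen (set xs) \<noteq> UNIV"

definition grade :: "'a::comm_ring_1 set \<Rightarrow> enat" where
  "grade J = Sup {enat (length xs) | xs. set xs \<subseteq> J \<and> regular_seq xs}"

text \<open>An element of K_i(a;A) is a coefficient function on i-subsets of {0..<n}
  (basis e_S). An element of K_i tensor A[T] is a coefficient function on pairs (S, alpha),
  alpha a monomial exponent supported in {0..<n}, with finite support.\<close>

definition ksign :: "nat set \<Rightarrow> nat \<Rightarrow> 'a::comm_ring_1" where
  "ksign S j = (- 1) ^ card {k\<in>S. k < j}"

definition koszul_K :: "nat \<Rightarrow> nat \<Rightarrow> (nat set \<Rightarrow> 'a::comm_ring_1) set" where
  "koszul_K n i = {f. \<forall>S. f S \<noteq> 0 \<longrightarrow> S \<subseteq> {..<n} \<and> card S = i}"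

text \<open>Koszul differential of a: e_S maps to sum over j in S of sign * a_j e_(S-{j}).\<close>
definition koszul_d :: "nat \<Rightarrow> (nat \<Rightarrow> 'a::comm_ring_1) \<Rightarrow> (nat set \<Rightarrow> 'a) \<Rightarrow> (nat set \<Rightarrow> 'a)" where
  "koszul_d n a f = (\<lambda>S. \<Sum>j\<in>{..<n} - S. ksign S j * a j * f (insert j S))"

definition koszul_Z :: "nat \<Rightarrow> (nat \<Rightarrow> 'a::comm_ring_1) \<Rightarrow> nat \<Rightarrow> (nat set \<Rightarrow> 'a) set" where
  "koszul_Z n a i = {f \<in> koszul_K n i. koszul_d n a f = (\<lambda>_. 0)}"

definition KT :: "nat \<Rightarrow> nat \<Rightarrow> (nat set \<Rightarrow> (nat \<Rightarrow> nat) \<Rightarrow> 'a::comm_ring_1) set" where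
  "KT n i = {f. finite {(S, \<alpha>). f S \<alpha> \<noteq> 0} \<and>
                (\<forall>S \<alpha>. f S \<alpha> \<noteq> 0 \<longrightarrow> S \<subseteq> {..<n} \<and> card S = i \<and> (\<forall>j\<ge>n. \<alpha> j = 0))}"

text \<open>Z_i tensor A[T] = direct sum over monomials T^alpha of Z_i T^alpha.\<close>
definition approx_Z :: "nat \<Rightarrow> (nat \<Rightarrow> 'a::comm_ring_1) \<Rightarrow> nat \<Rightarrow> (nat set \<Rightarrow> (nat \<Rightarrow> nat) \<Rightarrow> 'a) set" where
  "approx_Z n a i = {f \<in> KT n i. \<forall>\<alpha>. (\<lambda>S. f S \<alpha>) \<in> koszul_Z n a i}"

text \<open>Koszul differential of T: e_S T^beta maps to sum over j in S of sign * e_(S-{j}) T^(beta + delta_j).\<close>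
definition koszul_dT :: "nat \<Rightarrow> (nat set \<Rightarrow> (nat \<Rightarrow> nat) \<Rightarrow> 'a::comm_ring_1) \<Rightarrow> (nat set \<Rightarrow> (nat \<Rightarrow> nat) \<Rightarrow> 'a)" where
  "koszul_dT n f = (\<lambda>S \<alpha>. \<Sum>j\<in>{j\<in>{..<n} - S. 1 \<le> \<alpha> j}. ksign S j * f (insert j S) (\<alpha>(j := \<alpha> j - 1)))"

definition approx_H_zero :: "nat \<Rightarrow> (nat \<Rightarrow> 'a::comm_ring_1) \<Rightarrow> nat \<Rightarrow> bool" where
  "approx_H_zero n a i \<longleftrightarrow>
     (\<forall>f\<in>approx_Z n a i. koszul_dT n f = (\<lambda>_ _. 0) \<longrightarrow> (\<exists>g\<in>approx_Z n a (Suc i). koszul_dT n g = f))"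

end

theory Submission
  imports Defs
begin



lemma is_ideal_ideal_gen: "is_ideal (ideal_gen F)"
  unfolding is_ideal_def ideal_gen_def by auto

lemma ideal_gen_sup: "F \<subseteq> ideal_gen F"
  unfolding ideal_gen_def by auto

lemma ideal_gen_least: "is_ideal J \<Longrightarrow> F \<subseteq> J \<Longrightarrow> ideal_gen F \<subseteq> J"
  unfolding ideal_gen_def by auto

lemma ideal_gen_mono: "F \<subseteq> F' \<Longrightarrow> ideal_gen F \<subseteq> ideal_gen F'"
  by (meson ideal_gen_least ideal_gen_sup is_ideal_ideal_gen order_trans)

lemma ideal_0: "is_ideal J \<Longrightarrow> 0 \<in> J" unfolding is_ideal_def by auto
lemma ideal_add: "is_ideal J \<Longrightarrow> x \<in> J \<Longrightarrow> y \<in> J \<Longrightarrow> x + y \<in> J" unfolding is_ideal_def by auto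
lemma ideal_mult: "is_ideal J \<Longrightarrow> x \<in> J \<Longrightarrow> r * x \<in> J" unfolding is_ideal_def by auto
lemma ideal_mult2: "is_ideal J \<Longrightarrow> x \<in> J \<Longrightarrow> x * r \<in> J"
  using ideal_mult[of J x r] by (simp add: mult.commute)
lemma ideal_neg: "is_ideal J \<Longrightarrow> x \<in> J \<Longrightarrow> - x \<in> J"
  using ideal_mult[of J x "-1"] by simp
lemma ideal_diff: "is_ideal J \<Longrightarrow> x \<in> J \<Longrightarrow> y \<in> J \<Longrightarrow> x - y \<in> J"
  using ideal_add[of J x "-y"] ideal_neg[of J y] by simp
lemma ideal_sum: "is_ideal J \<Longrightarrow> (\<And>x. x \<in> A \<Longrightarrow> g x \<in> J) \<Longrightarrow> sum g A \<in> J"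
proof (induction A rule: infinite_finite_induct)
  case (infinite A) then show ?case by (simp add: ideal_0)
next
  case empty then show ?case by (simp add: ideal_0)
next
  case (insert x F) then show ?case by (simp add: ideal_add)
qed

lemma ideal_gen_empty: "ideal_gen ({}::'a::comm_ring_1 set) = {0}"
proof
  have "is_ideal ({0}::'a set)" unfolding is_ideal_def by auto
  then show "ideal_gen ({}::'a set) \<subseteq> {0}" by (rule ideal_gen_least) auto
  show "{0} \<subseteq> ideal_gen ({}::'a set)" using ideal_0[OF is_ideal_ideal_gen] by auto
qed

lemma ideal_gen_insert:
  fixes x :: "'a::comm_ring_1"
  shows "ideal_gen (insert x J) \<subseteq> {c + r * x | c r. c \<in> ideal_gen J}"
proof (rule ideal_gen_least)
  let ?I = "ideal_gen J"
  have I: "is_ideal ?I" by (rule is_ideal_ideal_gen)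
  show "is_ideal {c + r * x | c r. c \<in> ?I}"
    unfolding is_ideal_def
  proof (intro conjI ballI allI)
    show "0 \<in> {c + r * x | c r. c \<in> ?I}" using ideal_0[OF I] by (intro CollectI exI[of _ 0]) auto
  next
    fix u v assume "u \<in> {c + r * x | c r. c \<in> ?I}" "v \<in> {c + r * x | c r. c \<in> ?I}"
    then obtain c1 r1 c2 r2 where "u = c1 + r1 * x" "c1 \<in> ?I" "v = c2 + r2 * x" "c2 \<in> ?I" by auto
    then show "u + v \<in> {c + r * x | c r. c \<in> ?I}"
      by (intro CollectI exI[of _ "c1 + c2"] exI[of _ "r1 + r2"]) (auto simp: ideal_add[OF I] algebra_simps)
  next
    fix s u assume "u \<in> {c + r * x | c r. c \<in> ?I}"
    then obtain c1 r1 where "u = c1 + r1 * x" "c1 \<in> ?I" by auto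
    have "s * u = s * c1 + (s * r1) * x" using \<open>u = c1 + r1 * x\<close> by (simp add: algebra_simps)
    then show "s * u \<in> {c + r * x | c r. c \<in> ?I}"
      using ideal_mult[OF I \<open>c1 \<in> ?I\<close>, of s] by blast
  qed
  show "insert x J \<subseteq> {c + r * x | c r. c \<in> ?I}"
  proof
    fix y assume "y \<in> insert x J"
    then show "y \<in> {c + r * x | c r. c \<in> ?I}"
    proof
      assume "y = x" then show ?thesis using ideal_0[OF I] by (intro CollectI exI[of _ 0] exI[of _ 1]) auto
    next
      assume "y \<in> J" then show ?thesis using ideal_gen_sup[of J]
        by (intro CollectI exI[of _ y] exI[of _ 0]) auto
    qed
  qed
qed

lemma ksign_insert:
  assumes "j \<notin> S"
  shows "ksign (insert j S) k = (if j < k then -1 else 1) * (ksign S k :: 'a::comm_ring_1)"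
proof -
  have fin: "finite {x\<in>S. x < k}" by (rule finite_subset[of _ "{..<k}"]) auto
  show ?thesis
  proof (cases "j < k")
    case True
    then have "{x\<in>insert j S. x < k} = insert j {x\<in>S. x < k}" by auto
    then show ?thesis using True assms fin by (simp add: ksign_def card_insert_disjoint)
  next
    case False
    then have "{x\<in>insert j S. x < k} = {x\<in>S. x < k}" by auto
    then show ?thesis using False by (simp add: ksign_def)
  qed
qed

lemma ksign_sq: "ksign S j * ksign S j = (1::'a::comm_ring_1)"
  unfolding ksign_def by (simp add: power_mult_distrib[symmetric])

lemma ksign_remove:
  assumes "q \<in> S"
  shows "ksign S k = (if q < k then -1 else 1) * (ksign (S - {q}) k :: 'a::comm_ring_1)"
proof -
  have "S = insert q (S - {q})" using assms by auto
  then have "ksign S k = (ksign (insert q (S - {q})) k :: 'a)" by simp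
  also have "\<dots> = (if q < k then -1 else 1) * ksign (S - {q}) k" by (rule ksign_insert) auto
  finally show ?thesis .
qed

lemma antisym_double_sum:
  fixes \<phi> :: "nat \<Rightarrow> nat \<Rightarrow> 'a::comm_ring_1"
  assumes fin: "finite A" and anti: "\<And>j k. j \<in> A \<Longrightarrow> k \<in> A \<Longrightarrow> j \<noteq> k \<Longrightarrow> \<phi> k j = - \<phi> j k"
  shows "(\<Sum>j\<in>A. \<Sum>k\<in>A - {j}. \<phi> j k) = 0"
proof -
  have split: "(\<Sum>k\<in>A - {j}. \<phi> j k) = (\<Sum>k\<in>{k\<in>A. k < j}. \<phi> j k) + (\<Sum>k\<in>{k\<in>A. j < k}. \<phi> j k)" for j
  proof -
    have "A - {j} = {k\<in>A. k < j} \<union> {k\<in>A. j < k}" by auto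
    moreover have "{k\<in>A. k < j} \<inter> {k\<in>A. j < k} = {}" by auto
    ultimately show ?thesis using fin by (simp add: sum.union_disjoint)
  qed
  have "(\<Sum>j\<in>A. \<Sum>k\<in>{k\<in>A. j < k}. \<phi> j k) = (\<Sum>k\<in>A. \<Sum>j\<in>{j\<in>A. j < k}. \<phi> j k)"
    using sum.swap_restrict[OF fin fin, of "\<lambda>j k. \<phi> j k" "\<lambda>j k. j < k"] by simp
  also have "\<dots> = (\<Sum>k\<in>A. \<Sum>j\<in>{j\<in>A. j < k}. - \<phi> k j)"
  proof (intro sum.cong refl)
    fix k j assume "k \<in> A" "j \<in> {j\<in>A. j < k}"
    then show "\<phi> j k = - \<phi> k j" using anti[of k j] by simp
  qed
  also have "\<dots> = - (\<Sum>j\<in>A. \<Sum>k\<in>{k\<in>A. k < j}. \<phi> j k)"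
    by (simp add: sum_negf)
  finally show ?thesis by (simp add: split sum.distrib)
qed



lemma kd_add: "koszul_d n a (\<lambda>S. f S + g S) S = koszul_d n a f S + koszul_d n a g S"
  by (simp add: koszul_d_def sum.distrib algebra_simps)

lemma kd_diff: "koszul_d n a (\<lambda>S. f S - g S) S = koszul_d n a f S - koszul_d n a g S"
  by (simp add: koszul_d_def sum_subtractf algebra_simps)

lemma kd_smult: "koszul_d n a (\<lambda>S. r * f S) S = r * koszul_d n a f S"
  by (simp add: koszul_d_def sum_distrib_left algebra_simps)

lemma kd_zero: "koszul_d n a (\<lambda>S. 0) S = 0"
  by (simp add: koszul_d_def)

lemma kd_kd: "koszul_d n a (koszul_d n a f) S = 0"
proof -
  let ?A = "{..<n} - S"
  define \<phi> where "\<phi> j k = ksign S j * a j * (ksign (insert j S) k * a k * f (insert k (insert j S)))" for j k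
  have "koszul_d n a (koszul_d n a f) S = (\<Sum>j\<in>?A. \<Sum>k\<in>?A - {j}. \<phi> j k)"
    unfolding koszul_d_def \<phi>_def
  proof (intro sum.cong refl)
    fix j assume "j \<in> ?A"
    have e: "{..<n} - insert j S = ?A - {j}" by auto
    show "ksign S j * a j * (\<Sum>k\<in>{..<n} - insert j S. ksign (insert j S) k * a k * f (insert k (insert j S))) =
         (\<Sum>k\<in>?A - {j}. ksign S j * a j * (ksign (insert j S) k * a k * f (insert k (insert j S))))"
      unfolding e by (rule sum_distrib_left)
  qed
  also have "\<dots> = 0"
  proof (rule antisym_double_sum)
    fix j k assume jk: "j \<in> ?A" "k \<in> ?A" "j \<noteq> k"
    have e: "insert k (insert j S) = insert j (insert k S)" by auto
    have s1: "ksign (insert j S) k = (if j < k then -1 else 1) * (ksign S k :: 'a)"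
      using jk by (intro ksign_insert) auto
    have s2: "ksign (insert k S) j = (if k < j then -1 else 1) * (ksign S j :: 'a)"
      using jk by (intro ksign_insert) auto
    show "\<phi> k j = - \<phi> j k" unfolding \<phi>_def e s1 s2 using jk
      by (cases "j < k") (simp_all add: algebra_simps)
  qed simp
  finally show ?thesis .
qed

definition wedge :: "nat \<Rightarrow> (nat set \<Rightarrow> 'a::comm_ring_1) \<Rightarrow> nat set \<Rightarrow> 'a" where
  "wedge k f = (\<lambda>T. if k \<in> T then ksign (T - {k}) k * f (T - {k}) else 0)"

lemma wedge_id:
  assumes kn: "k < n"
  shows "a k * f S = koszul_d n a (wedge k f) S + wedge k (koszul_d n a f) S"
proof (cases "k \<in> S")
  case True
  let ?A = "{..<n} - S"
  let ?s = "ksign (S - {k}) k :: 'a"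
  have A2: "{..<n} - (S - {k}) = insert k ?A" using True kn by auto
  have kA: "k \<notin> ?A" using True by auto
  have S: "insert k (S - {k}) = S" using True by auto
  have "wedge k (koszul_d n a f) S = ?s * (\<Sum>j\<in>insert k ?A. ksign (S - {k}) j * a j * f (insert j (S - {k})))"
    using True by (simp add: wedge_def koszul_d_def A2)
  also have "\<dots> = ?s * (ksign (S - {k}) k * a k * f S) + (\<Sum>j\<in>?A. ?s * ksign (S - {k}) j * a j * f (insert j (S - {k})))"
    using kA S by (simp add: sum_distrib_left algebra_simps)
  also have "?s * (ksign (S - {k}) k * a k * f S) = (?s * ?s) * (a k * f S)"
    by (simp only: mult_ac)
  also have "\<dots> = a k * f S" by (simp add: ksign_sq)
  finally have w: "wedge k (koszul_d n a f) S = a k * f S + (\<Sum>j\<in>?A. ?s * ksign (S - {k}) j * a j * f (insert j (S - {k})))" .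
  have "koszul_d n a (wedge k f) S = (\<Sum>j\<in>?A. ksign S j * a j * (ksign (insert j S - {k}) k * f (insert j S - {k})))"
    unfolding koszul_d_def wedge_def using True by (intro sum.cong refl) auto
  also have "\<dots> = (\<Sum>j\<in>?A. - (?s * ksign (S - {k}) j * a j * f (insert j (S - {k}))))"
  proof (intro sum.cong refl)
    fix j assume j: "j \<in> ?A"
    then have jk: "j \<noteq> k" "j \<notin> S - {k}" using True by auto
    have e: "insert j S - {k} = insert j (S - {k})" using jk by auto
    have s1: "ksign S j = (if k < j then -1 else 1) * (ksign (S - {k}) j :: 'a)"
      using True by (rule ksign_remove)
    have s2: "ksign (insert j (S - {k})) k = (if j < k then -1 else 1) * (ksign (S - {k}) k :: 'a)"
      using jk by (intro ksign_insert) auto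
    show "ksign S j * a j * (ksign (insert j S - {k}) k * f (insert j S - {k})) =
          - (?s * ksign (S - {k}) j * a j * f (insert j (S - {k})))"
      unfolding e s1 s2 using jk by (cases "j < k") (auto simp: algebra_simps)
  qed
  also have "\<dots> = - (\<Sum>j\<in>?A. ?s * ksign (S - {k}) j * a j * f (insert j (S - {k})))"
    by (simp add: sum_negf)
  finally show ?thesis using w by simp
next
  case False
  let ?A = "{..<n} - S"
  have kA: "k \<in> ?A" using False kn by auto
  have "koszul_d n a (wedge k f) S = (\<Sum>j\<in>?A. if j = k then ksign S k * a k * (ksign S k * f S) else 0)"
    unfolding koszul_d_def wedge_def
  proof (intro sum.cong refl)
    fix j assume "j \<in> ?A"
    then show "ksign S j * a j * (if k \<in> insert j S then ksign (insert j S - {k}) k * f (insert j S - {k}) else 0) =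
       (if j = k then ksign S k * a k * (ksign S k * f S) else 0)"
      using False by (auto simp: insert_Diff_if)
  qed
  also have "\<dots> = ksign S k * a k * (ksign S k * f S)"
    using kA by (simp add: sum.delta)
  also have "\<dots> = (ksign S k * ksign S k) * (a k * f S)" by (simp only: mult_ac)
  also have "\<dots> = a k * f S" by (simp add: ksign_sq)
  finally show ?thesis using False by (simp add: wedge_def)
qed

lemma kd_K:
  assumes "f \<in> koszul_K n (Suc i)"
  shows "koszul_d n a f \<in> koszul_K n i"
proof -
  { fix S assume "koszul_d n a f S \<noteq> 0"
    then obtain j where j: "j \<in> {..<n} - S" "ksign S j * a j * f (insert j S) \<noteq> 0"
      unfolding koszul_d_def by (rule sum.not_neutral_contains_not_neutral)
    then have "f (insert j S) \<noteq> 0" by auto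
    then have "insert j S \<subseteq> {..<n}" "card (insert j S) = Suc i" using assms by (auto simp: koszul_K_def)
    moreover have "finite S" by (rule finite_subset[OF _ finite_lessThan[of n]]) (use calculation(1) in auto)
    ultimately have "S \<subseteq> {..<n} \<and> card S = i" using j(1) by simp }
  then show ?thesis by (auto simp: koszul_K_def)
qed

lemma wedge_K:
  assumes "f \<in> koszul_K n i" "k < n"
  shows "wedge k f \<in> koszul_K n (Suc i)"
proof -
  { fix T assume "wedge k f T \<noteq> 0"
    then have kT: "k \<in> T" and "f (T - {k}) \<noteq> 0" by (auto simp: wedge_def split: if_splits)
    then have 1: "T - {k} \<subseteq> {..<n}" and 2: "card (T - {k}) = i" using assms by (auto simp: koszul_K_def)
    have 3: "finite (T - {k})" by (rule finite_subset[OF _ finite_lessThan[of n]]) (use 1 in auto)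
    have "T = insert k (T - {k})" using kT by auto
    then have "T \<subseteq> {..<n} \<and> card T = Suc i"
      using 1 2 3 assms(2) by (metis Diff_iff card_insert_disjoint insert_subset lessThan_iff singletonI) }
  then show ?thesis by (auto simp: koszul_K_def)
qed



definition kcyc :: "nat \<Rightarrow> (nat \<Rightarrow> 'a::comm_ring_1) \<Rightarrow> 'a set \<Rightarrow> nat \<Rightarrow> (nat set \<Rightarrow> 'a) \<Rightarrow> bool" where
  "kcyc n a J j f \<longleftrightarrow> f \<in> koszul_K n j \<and> (\<forall>S. koszul_d n a f S \<in> ideal_gen J)"

definition kbd :: "nat \<Rightarrow> (nat \<Rightarrow> 'a::comm_ring_1) \<Rightarrow> 'a set \<Rightarrow> nat \<Rightarrow> (nat set \<Rightarrow> 'a) \<Rightarrow> bool" where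
  "kbd n a J j f \<longleftrightarrow> (\<exists>h\<in>koszul_K n (Suc j). \<forall>S. f S - koszul_d n a h S \<in> ideal_gen J)"

definition regmod :: "'a::comm_ring_1 set \<Rightarrow> 'a list \<Rightarrow> bool" where
  "regmod J xs \<longleftrightarrow> (\<forall>i<length xs. \<forall>y. xs ! i * y \<in> ideal_gen (J \<union> set (take i xs)) \<longrightarrow> y \<in> ideal_gen (J \<union> set (take i xs)))"

lemma K_zero: "(\<lambda>S. 0) \<in> koszul_K n j" by (simp add: koszul_K_def)

lemma K_add: "f \<in> koszul_K n j \<Longrightarrow> g \<in> koszul_K n j \<Longrightarrow> (\<lambda>S. f S + g S) \<in> koszul_K n j"
proof -
  assume A: "f \<in> koszul_K n j" "g \<in> koszul_K n j"
  { fix S assume "f S + g S \<noteq> 0"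
    then have "f S \<noteq> 0 \<or> g S \<noteq> 0" by auto
    then have "S \<subseteq> {..<n} \<and> card S = j" using A unfolding koszul_K_def by blast }
  then show ?thesis unfolding koszul_K_def by blast
qed

lemma K_smult: "f \<in> koszul_K n j \<Longrightarrow> (\<lambda>S. r * f S) \<in> koszul_K n j"
proof -
  assume A: "f \<in> koszul_K n j"
  { fix S assume "r * f S \<noteq> 0"
    then have "f S \<noteq> 0" by auto
    then have "S \<subseteq> {..<n} \<and> card S = j" using A unfolding koszul_K_def by blast }
  then show ?thesis unfolding koszul_K_def by blast
qed

lemma kcyc_smult: "kcyc n a J j f \<Longrightarrow> kcyc n a J j (\<lambda>S. r * f S)"
proof -
  assume A: "kcyc n a J j f"
  have "(\<lambda>S. r * f S) \<in> koszul_K n j" using A unfolding kcyc_def by (blast intro: K_smult)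
  moreover have "koszul_d n a (\<lambda>S. r * f S) S \<in> ideal_gen J" for S
    unfolding kd_smult using A unfolding kcyc_def by (blast intro: ideal_mult[OF is_ideal_ideal_gen])
  ultimately show ?thesis unfolding kcyc_def by blast
qed

lemma ann:
  assumes cyc: "kcyc n a J j f" and r: "r \<in> ideal_gen (a ` {..<n})"
  shows "kbd n a J j (\<lambda>S. r * f S)"
proof -
  let ?B = "{r. kbd n a J j (\<lambda>S. r * f S)}"
  have I: "is_ideal (ideal_gen J)" by (rule is_ideal_ideal_gen)
  have "is_ideal ?B"
    unfolding is_ideal_def
  proof (intro conjI ballI allI)
    show "0 \<in> ?B" unfolding kbd_def
      by (auto intro!: bexI[of _ "\<lambda>S. 0"] simp: K_zero kd_zero ideal_0[OF I])
  next
    fix x y assume "x \<in> ?B" "y \<in> ?B"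
    then obtain h1 h2 where h: "h1 \<in> koszul_K n (Suc j)" "\<forall>S. x * f S - koszul_d n a h1 S \<in> ideal_gen J"
      "h2 \<in> koszul_K n (Suc j)" "\<forall>S. y * f S - koszul_d n a h2 S \<in> ideal_gen J" unfolding kbd_def by auto
    show "x + y \<in> ?B" unfolding kbd_def
    proof (intro CollectI bexI[of _ "\<lambda>S. h1 S + h2 S"] allI)
      fix S
      have "(x + y) * f S - koszul_d n a (\<lambda>S. h1 S + h2 S) S =
            (x * f S - koszul_d n a h1 S) + (y * f S - koszul_d n a h2 S)"
        by (simp add: kd_add algebra_simps)
      then show "(x + y) * f S - koszul_d n a (\<lambda>S. h1 S + h2 S) S \<in> ideal_gen J"
        using ideal_add[OF I h(2)[rule_format, of S] h(4)[rule_format, of S]] by simp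
    next
      show "(\<lambda>S. h1 S + h2 S) \<in> koszul_K n (Suc j)" using h(1) h(3) by (rule K_add)
    qed
  next
    fix s x assume "x \<in> ?B"
    then obtain h1 where h: "h1 \<in> koszul_K n (Suc j)" "\<forall>S. x * f S - koszul_d n a h1 S \<in> ideal_gen J"
      unfolding kbd_def by auto
    show "s * x \<in> ?B" unfolding kbd_def
    proof (intro CollectI bexI[of _ "\<lambda>S. s * h1 S"] allI)
      fix S
      have "s * x * f S - koszul_d n a (\<lambda>S. s * h1 S) S = s * (x * f S - koszul_d n a h1 S)"
        by (simp add: kd_smult algebra_simps)
      then show "s * x * f S - koszul_d n a (\<lambda>S. s * h1 S) S \<in> ideal_gen J"
        using ideal_mult[OF I h(2)[rule_format, of S], of s] by simp
    next
      show "(\<lambda>S. s * h1 S) \<in> koszul_K n (Suc j)" using h(1) by (rule K_smult)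
    qed
  qed
  moreover have "a ` {..<n} \<subseteq> ?B"
  proof
    fix y assume "y \<in> a ` {..<n}"
    then obtain k where k: "k < n" "y = a k" by auto
    show "y \<in> ?B" unfolding kbd_def
    proof (intro CollectI bexI[of _ "wedge k f"] allI)
      fix S
      have "a k * f S - koszul_d n a (wedge k f) S = wedge k (koszul_d n a f) S"
        using wedge_id[OF k(1), of a f S] by (simp add: algebra_simps)
      also have "\<dots> \<in> ideal_gen J"
        using cyc unfolding kcyc_def wedge_def by (auto simp: ideal_mult[OF I] ideal_0[OF I])
      finally show "y * f S - koszul_d n a (wedge k f) S \<in> ideal_gen J" using k by simp
    next
      show "wedge k f \<in> koszul_K n (Suc j)" using cyc k wedge_K unfolding kcyc_def by blast
    qed
  qed
  ultimately have "ideal_gen (a ` {..<n}) \<subseteq> ?B" by (rule ideal_gen_least)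
  then show ?thesis using r by auto
qed



lemma kd_ideal: "(\<And>S. c S \<in> ideal_gen J) \<Longrightarrow> koszul_d n a c S \<in> ideal_gen J"
  unfolding koszul_d_def by (intro ideal_sum[OF is_ideal_ideal_gen] ideal_mult[OF is_ideal_ideal_gen]) auto

lemma regstep:
  assumes y: "kcyc n a J j y"
    and IH: "\<And>f. kcyc n a (insert x J) (Suc j) f \<Longrightarrow> kbd n a (insert x J) (Suc j) f"
    and reg: "\<And>z. x * z \<in> ideal_gen J \<Longrightarrow> z \<in> ideal_gen J"
    and xy: "kbd n a J j (\<lambda>S. x * y S)"
  shows "kbd n a J j y"
proof -
  have I: "is_ideal (ideal_gen J)" by (rule is_ideal_ideal_gen)
  have I': "is_ideal (ideal_gen (insert x J))" by (rule is_ideal_ideal_gen)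
  have sub: "ideal_gen J \<subseteq> ideal_gen (insert x J)" by (rule ideal_gen_mono) auto
  have xin: "x \<in> ideal_gen (insert x J)" using ideal_gen_sup[of "insert x J"] by auto
  obtain h where h: "h \<in> koszul_K n (Suc j)" "\<And>S. x * y S - koszul_d n a h S \<in> ideal_gen J"
    using xy unfolding kbd_def by auto
  have "kcyc n a (insert x J) (Suc j) h"
    unfolding kcyc_def
  proof (intro conjI allI)
    fix S
    have "koszul_d n a h S = x * y S - (x * y S - koszul_d n a h S)" by simp
    also have "\<dots> \<in> ideal_gen (insert x J)"
      using ideal_diff[OF I' ideal_mult2[OF I' xin, of "y S"] subsetD[OF sub h(2)[of S]]] by simp
    finally show "koszul_d n a h S \<in> ideal_gen (insert x J)" .
  qed (rule h(1))
  from IH[OF this] obtain h' where h': "h' \<in> koszul_K n (Suc (Suc j))"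
    "\<And>S. h S - koszul_d n a h' S \<in> ideal_gen (insert x J)" unfolding kbd_def by auto
  have ex: "\<exists>r c. h S - koszul_d n a h' S = c + r * x \<and> c \<in> ideal_gen J" for S
    using subsetD[OF ideal_gen_insert h'(2)[of S]] by auto
  define u where "u S = (if S \<subseteq> {..<n} \<and> card S = Suc j
     then (SOME r. \<exists>c. h S - koszul_d n a h' S = c + r * x \<and> c \<in> ideal_gen J) else 0)" for S
  define c where "c S = h S - koszul_d n a h' S - u S * x" for S
  have dK: "koszul_d n a h' \<in> koszul_K n (Suc j)" using h'(1) by (rule kd_K)
  have cJ: "c S \<in> ideal_gen J" for S
  proof (cases "S \<subseteq> {..<n} \<and> card S = Suc j")
    case True
    then have "\<exists>c. h S - koszul_d n a h' S = c + u S * x \<and> c \<in> ideal_gen J"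
      unfolding u_def using someI_ex[OF ex[of S]] by simp
    then show ?thesis unfolding c_def by auto
  next
    case False
    then have "h S = 0" "koszul_d n a h' S = 0" "u S = 0" using h(1) dK
      unfolding koszul_K_def u_def by auto
    then show ?thesis unfolding c_def using ideal_0[OF I] by simp
  qed
  have uK: "u \<in> koszul_K n (Suc j)" unfolding koszul_K_def u_def by auto
  have heq: "h = (\<lambda>S. (koszul_d n a h' S + x * u S) + c S)"
    by (rule ext) (simp add: c_def algebra_simps)
  have dh: "koszul_d n a h S = x * koszul_d n a u S + koszul_d n a c S" for S
    by (subst heq) (simp add: kd_add kd_smult kd_kd)
  show ?thesis unfolding kbd_def
  proof (intro bexI[OF _ uK] allI)
    fix S
    have "x * (y S - koszul_d n a u S) = (x * y S - koszul_d n a h S) + koszul_d n a c S"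
      by (simp add: dh algebra_simps)
    also have "\<dots> \<in> ideal_gen J"
      using ideal_add[OF I h(2)[of S] kd_ideal[OF cJ]] by simp
    finally show "y S - koszul_d n a u S \<in> ideal_gen J" by (rule reg)
  qed
qed

lemma powstep:
  assumes "kcyc n a J j y"
    and step: "\<And>y. kcyc n a J j y \<Longrightarrow> kbd n a J j (\<lambda>S. x * y S) \<Longrightarrow> kbd n a J j y"
    and "kbd n a J j (\<lambda>S. x ^ N * y S)"
  shows "kbd n a J j y"
  using assms(1,3)
proof (induction N arbitrary: y)
  case 0
  then show ?case by simp
next
  case (Suc N)
  have "kbd n a J j (\<lambda>S. x ^ N * (x * y S))"
    using Suc.prems(2) by (simp add: mult.assoc mult.commute mult.left_commute)
  then have "kbd n a J j (\<lambda>S. x * y S)"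
    using Suc.IH[OF kcyc_smult[OF Suc.prems(1)]] by blast
  then show ?case using step[OF Suc.prems(1)] by blast
qed

lemma kvan:
  "regmod J xs \<Longrightarrow> (\<forall>x\<in>set xs. \<exists>k. x ^ k \<in> ideal_gen (a ` {..<n})) \<Longrightarrow> n < j + length xs
   \<Longrightarrow> kcyc n a J j f \<Longrightarrow> kbd n a J j f"
proof (induction xs arbitrary: J j f)
  case Nil
  have f0: "f S = 0" for S
  proof (rule ccontr)
    assume "f S \<noteq> 0"
    then have "S \<subseteq> {..<n}" "card S = j" using Nil.prems(4) unfolding kcyc_def koszul_K_def by auto
    then have "j \<le> n" using card_mono[of "{..<n}" S] by auto
    then show False using Nil.prems(3) by simp
  qed
  show ?case unfolding kbd_def
    by (intro bexI[OF _ K_zero]) (simp add: f0 kd_zero ideal_0[OF is_ideal_ideal_gen])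
next
  case (Cons x xs)
  have reg0: "x * z \<in> ideal_gen J \<Longrightarrow> z \<in> ideal_gen J" for z
    using Cons.prems(1) unfolding regmod_def by (metis length_Cons nth_Cons_0 set_empty sup_bot_right take_0 zero_less_Suc)
  have "regmod (insert x J) xs" unfolding regmod_def
  proof (intro allI impI)
    fix i y assume i: "i < length xs" and "xs ! i * y \<in> ideal_gen (insert x J \<union> set (take i xs))"
    moreover have "insert x J \<union> set (take i xs) = J \<union> set (take (Suc i) (x # xs))" by auto
    moreover have "(x # xs) ! Suc i = xs ! i" by simp
    ultimately show "y \<in> ideal_gen (insert x J \<union> set (take i xs))"
      using Cons.prems(1) i unfolding regmod_def by (metis Suc_less_eq length_Cons)
  qed
  then have IH: "kcyc n a (insert x J) (Suc j) g \<Longrightarrow> kbd n a (insert x J) (Suc j) g" for g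
    using Cons.IH[of "insert x J" "Suc j" g] Cons.prems(2,3) by auto
  obtain N where N: "x ^ N \<in> ideal_gen (a ` {..<n})" using Cons.prems(2) by auto
  have "kbd n a J j (\<lambda>S. x ^ N * f S)" using ann[OF Cons.prems(4) N] .
  then show ?case
    using powstep[OF Cons.prems(4) _ , of x N] regstep[OF _ IH reg0] by blast
qed



definition DA :: "nat \<Rightarrow> (nat \<Rightarrow> 'a::comm_ring_1) \<Rightarrow> (nat set \<Rightarrow> (nat \<Rightarrow> nat) \<Rightarrow> 'a) \<Rightarrow> nat set \<Rightarrow> (nat \<Rightarrow> nat) \<Rightarrow> 'a" where
  "DA n a f = (\<lambda>S \<alpha>. koszul_d n a (\<lambda>T. f T \<alpha>) S)"

definition supp2 :: "(nat set \<Rightarrow> (nat \<Rightarrow> nat) \<Rightarrow> 'a::zero) \<Rightarrow> (nat set \<times> (nat \<Rightarrow> nat)) set" where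
  "supp2 f = {(S, \<alpha>). f S \<alpha> \<noteq> 0}"

lemma dT_add: "koszul_dT n (\<lambda>S \<alpha>. F S \<alpha> + G S \<alpha>) = (\<lambda>S \<alpha>. koszul_dT n F S \<alpha> + koszul_dT n G S \<alpha>)"
  by (simp add: koszul_dT_def sum.distrib algebra_simps)

lemma dT_zero: "koszul_dT n (\<lambda>S \<alpha>. 0) = (\<lambda>S \<alpha>. (0::'a::comm_ring_1))"
  by (simp add: koszul_dT_def)

lemma DA_add: "DA n a (\<lambda>S \<alpha>. F S \<alpha> + G S \<alpha>) = (\<lambda>S \<alpha>. DA n a F S \<alpha> + DA n a G S \<alpha>)"
  by (simp add: DA_def kd_add)

lemma DA_zero: "DA n a (\<lambda>S \<alpha>. 0) = (\<lambda>S \<alpha>. 0)"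
  by (simp add: DA_def kd_zero)

lemma DA_DA: "DA n a (DA n a F) = (\<lambda>S \<alpha>. 0)"
  by (simp add: DA_def kd_kd)

lemma dT_dT: "koszul_dT n (koszul_dT n F) = (\<lambda>S \<alpha>. (0::'a::comm_ring_1))"
proof (intro ext)
  fix S :: "nat set" and \<alpha> :: "nat \<Rightarrow> nat"
  let ?B = "{j\<in>{..<n} - S. 1 \<le> \<alpha> j}"
  define \<phi> where "\<phi> j k = ksign S j * (ksign (insert j S) k * F (insert k (insert j S)) (\<alpha>(j := \<alpha> j - 1, k := \<alpha> k - 1)))" for j k
  have "koszul_dT n (koszul_dT n F) S \<alpha> = (\<Sum>j\<in>?B. \<Sum>k\<in>?B - {j}. \<phi> j k)"
    unfolding koszul_dT_def
  proof (intro sum.cong refl)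
    fix j assume j: "j \<in> ?B"
    have e: "{k \<in> {..<n} - insert j S. 1 \<le> (\<alpha>(j := \<alpha> j - 1)) k} = ?B - {j}" by auto
    show "ksign S j * (\<Sum>k\<in>{k \<in> {..<n} - insert j S. 1 \<le> (\<alpha>(j := \<alpha> j - 1)) k}.
             ksign (insert j S) k * F (insert k (insert j S)) ((\<alpha>(j := \<alpha> j - 1)) (k := (\<alpha>(j := \<alpha> j - 1)) k - 1))) =
          (\<Sum>k\<in>?B - {j}. \<phi> j k)"
      unfolding e \<phi>_def sum_distrib_left by (intro sum.cong refl) auto
  qed
  also have "\<dots> = 0"
  proof (rule antisym_double_sum)
    fix j k assume jk: "j \<in> ?B" "k \<in> ?B" "j \<noteq> k"
    have e: "insert k (insert j S) = insert j (insert k S)" by auto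
    have e2: "\<alpha>(k := \<alpha> k - 1, j := \<alpha> j - 1) = \<alpha>(j := \<alpha> j - 1, k := \<alpha> k - 1)"
      by (rule fun_upd_twist) (use jk(3) in simp)
    have s1: "ksign (insert j S) k = (if j < k then -1 else 1) * (ksign S k :: 'a)"
      using jk by (intro ksign_insert) auto
    have s2: "ksign (insert k S) j = (if k < j then -1 else 1) * (ksign S j :: 'a)"
      using jk by (intro ksign_insert) auto
    show "\<phi> k j = - \<phi> j k" unfolding \<phi>_def e e2 s1 s2 using jk
      by (cases "j < k") (simp_all add: algebra_simps)
  qed simp
  finally show "koszul_dT n (koszul_dT n F) S \<alpha> = 0" .
qed

lemma DA_dT: "DA n a (koszul_dT n F) = (\<lambda>S \<alpha>. - koszul_dT n (DA n a F) S \<alpha>)"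
proof (intro ext)
  fix S :: "nat set" and \<alpha> :: "nat \<Rightarrow> nat"
  let ?A = "{..<n} - S"
  let ?B = "{j\<in>{..<n} - S. 1 \<le> \<alpha> j}"
  define g where "g k j = ksign S k * a k * (ksign (insert k S) j * F (insert j (insert k S)) (\<alpha>(j := \<alpha> j - 1)))" for k j
  have "DA n a (koszul_dT n F) S \<alpha> = (\<Sum>k\<in>?A. \<Sum>j\<in>{j. j \<in> ?B \<and> k \<noteq> j}. g k j)"
    unfolding DA_def koszul_d_def koszul_dT_def
  proof (intro sum.cong refl)
    fix k assume "k \<in> ?A"
    have e: "{j \<in> {..<n} - insert k S. 1 \<le> \<alpha> j} = {j. j \<in> ?B \<and> k \<noteq> j}" by auto
    show "ksign S k * a k * (\<Sum>j\<in>{j \<in> {..<n} - insert k S. 1 \<le> \<alpha> j}. ksign (insert k S) j * F (insert j (insert k S)) (\<alpha>(j := \<alpha> j - 1))) =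
      (\<Sum>j\<in>{j. j \<in> ?B \<and> k \<noteq> j}. g k j)"
      unfolding e g_def by (rule sum_distrib_left)
  qed
  also have "\<dots> = (\<Sum>j\<in>?B. \<Sum>k\<in>{k. k \<in> ?A \<and> k \<noteq> j}. g k j)"
    by (rule sum.swap_restrict) auto
  also have "\<dots> = (\<Sum>j\<in>?B. - (ksign S j * (\<Sum>k\<in>{..<n} - insert j S. ksign (insert j S) k * a k * F (insert k (insert j S)) (\<alpha>(j := \<alpha> j - 1)))))"
  proof (intro sum.cong refl)
    fix j assume j: "j \<in> ?B"
    have e: "{k. k \<in> ?A \<and> k \<noteq> j} = {..<n} - insert j S" by auto
    show "(\<Sum>k\<in>{k. k \<in> ?A \<and> k \<noteq> j}. g k j) = - (ksign S j * (\<Sum>k\<in>{..<n} - insert j S. ksign (insert j S) k * a k * F (insert k (insert j S)) (\<alpha>(j := \<alpha> j - 1))))"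
      unfolding e sum_distrib_left sum_negf[symmetric]
    proof (intro sum.cong refl)
      fix k assume k: "k \<in> {..<n} - insert j S"
      have jk: "j \<notin> S" "k \<notin> S" "j \<noteq> k" using j k by auto
      have ee: "insert j (insert k S) = insert k (insert j S)" by auto
      have s1: "ksign (insert j S) k = (if j < k then -1 else 1) * (ksign S k :: 'a)"
        using jk by (intro ksign_insert) auto
      have s2: "ksign (insert k S) j = (if k < j then -1 else 1) * (ksign S j :: 'a)"
        using jk by (intro ksign_insert) auto
      show "g k j = - (ksign S j * (ksign (insert j S) k * a k * F (insert k (insert j S)) (\<alpha>(j := \<alpha> j - 1))))"
        unfolding g_def ee s1 s2 using jk by (cases "j < k") (simp_all add: algebra_simps)
    qed
  qed
  also have "\<dots> = - koszul_dT n (DA n a F) S \<alpha>"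
    unfolding DA_def koszul_d_def koszul_dT_def by (simp add: sum_negf)
  finally show "DA n a (koszul_dT n F) S \<alpha> = - koszul_dT n (DA n a F) S \<alpha>" .
qed



definition deg :: "nat \<Rightarrow> (nat \<Rightarrow> nat) \<Rightarrow> nat" where
  "deg n \<alpha> = (\<Sum>j<n. \<alpha> j)"

lemma deg_upd: assumes "p < n" shows "deg n (\<beta>(p := Suc (\<beta> p))) = Suc (deg n \<beta>)"
proof -
  have "deg n (\<beta>(p := Suc (\<beta> p))) = Suc (\<beta> p) + (\<Sum>j\<in>{..<n} - {p}. \<beta> j)"
    unfolding deg_def using assms by (subst sum.remove[of _ p]) auto
  also have "\<dots> = Suc (deg n \<beta>)"
    unfolding deg_def using assms by (subst (2) sum.remove[of _ p]) auto
  finally show ?thesis .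
qed

definition Uset :: "nat \<Rightarrow> nat set \<Rightarrow> (nat \<Rightarrow> nat) \<Rightarrow> nat set" where
  "Uset n S \<beta> = S \<union> {j. j < n \<and> 1 \<le> \<beta> j}"

definition hom :: "nat \<Rightarrow> (nat set \<Rightarrow> (nat \<Rightarrow> nat) \<Rightarrow> 'a::comm_ring_1) \<Rightarrow> nat set \<Rightarrow> (nat \<Rightarrow> nat) \<Rightarrow> 'a" where
  "hom n f S' \<beta> = (let p = Min (Uset n S' \<beta>) in
     if S' \<noteq> {} \<and> finite S' \<and> p \<in> S' then ksign (S' - {p}) p * f (S' - {p}) (\<beta>(p := Suc (\<beta> p))) else 0)"

lemma Uset_fin: "finite S \<Longrightarrow> finite (Uset n S \<beta>)"
  unfolding Uset_def by auto

lemma hom_eq: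
  fixes f :: "nat set \<Rightarrow> (nat \<Rightarrow> nat) \<Rightarrow> 'a::comm_ring_1"
  assumes fK: "f \<in> KT n i" and i: "1 \<le> i" and cyc: "koszul_dT n f = (\<lambda>S \<alpha>. 0)"
  shows "koszul_dT n (hom n f) S \<alpha> = f S \<alpha>"
proof -
  let ?B = "{j\<in>{..<n} - S. 1 \<le> \<alpha> j}"
  have shape: "f T \<gamma> \<noteq> 0 \<Longrightarrow> T \<subseteq> {..<n} \<and> card T = i \<and> (\<forall>j\<ge>n. \<gamma> j = 0)" for T \<gamma>
    using fK unfolding KT_def by auto
  show ?thesis
  proof (cases "finite S")
    case False
    then have "f S \<alpha> = 0" using shape[of S \<alpha>] finite_subset[of S "{..<n}"] by auto
    moreover have "hom n f (insert j S) \<beta> = 0" for j \<beta> using False by (simp add: hom_def Let_def)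
    ultimately show ?thesis by (simp add: koszul_dT_def)
  next
    case finS: True
    show ?thesis
    proof (cases "Uset n S \<alpha> = {}")
      case True
      then have S0: "S = {}" and B0: "?B = {}" unfolding Uset_def by auto
      have "f {} \<alpha> = 0" using shape[of "{}" \<alpha>] i by auto
      then show ?thesis unfolding koszul_dT_def B0 using S0 by simp
    next
      case Une: False
      define q where "q = Min (Uset n S \<alpha>)"
      have qU: "q \<in> Uset n S \<alpha>" unfolding q_def using Une Uset_fin[OF finS] by auto
      have qmin: "x \<in> Uset n S \<alpha> \<Longrightarrow> q \<le> x" for x unfolding q_def using Uset_fin[OF finS] by auto
      have BU: "?B \<subseteq> Uset n S \<alpha>" unfolding Uset_def by auto
      have Uj: "Uset n (insert j S) (\<alpha>(j := \<alpha> j - 1)) = Uset n S \<alpha>" if "j \<in> ?B" for j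
        using that unfolding Uset_def by auto
      have homj: "hom n f (insert j S) (\<alpha>(j := \<alpha> j - 1)) =
          (if q \<in> insert j S then ksign (insert j S - {q}) q * f (insert j S - {q}) ((\<alpha>(j := \<alpha> j - 1))(q := Suc ((\<alpha>(j := \<alpha> j - 1)) q))) else 0)"
        if "j \<in> ?B" for j
        using Uj[OF that] finS unfolding hom_def Let_def q_def by simp
      show ?thesis
      proof (cases "q \<in> S")
        case False
        then have qB: "q \<in> ?B" using qU unfolding Uset_def by auto
        have "koszul_dT n (hom n f) S \<alpha> = (\<Sum>j\<in>?B. if j = q then ksign S q * (ksign S q * f S \<alpha>) else 0)"
          unfolding koszul_dT_def
        proof (intro sum.cong refl)
          fix j assume j: "j \<in> ?B"
          show "ksign S j * hom n f (insert j S) (\<alpha>(j := \<alpha> j - 1)) = (if j = q then ksign S q * (ksign S q * f S \<alpha>) else 0)"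
          proof (cases "j = q")
            case True
            have "insert q S - {q} = S" using False by auto
            moreover have "(\<alpha>(q := \<alpha> q - 1))(q := Suc ((\<alpha>(q := \<alpha> q - 1)) q)) = \<alpha>"
              using qB by auto
            ultimately show ?thesis using homj[OF j] True by simp
          next
            case ne: False
            then show ?thesis using homj[OF j] False by simp
          qed
        qed
        also have "\<dots> = ksign S q * (ksign S q * f S \<alpha>)" using qB by (simp add: sum.delta)
        also have "\<dots> = (ksign S q * ksign S q) * f S \<alpha>" by (simp only: mult.assoc)
        also have "\<dots> = f S \<alpha>" by (simp add: ksign_sq)
        finally show ?thesis .
      next
        case qS: True
        show ?thesis
        proof (cases "q < n")
          case False
          then have B0: "?B = {}" using qmin BU by force
          have "f S \<alpha> = 0" using shape[of S \<alpha>] qS False by auto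
          then show ?thesis unfolding koszul_dT_def B0 by simp
        next
          case qn: True
          let ?S0 = "S - {q}"
          let ?s = "ksign ?S0 q :: 'a"
          let ?a0 = "\<alpha>(q := Suc (\<alpha> q))"
          have B': "{j\<in>{..<n} - ?S0. 1 \<le> ?a0 j} = insert q ?B" using qS qn by auto
          have qnB: "q \<notin> ?B" using qS by auto
          have ins: "insert q ?S0 = S" using qS by auto
          have "0 = koszul_dT n f ?S0 ?a0" using cyc by simp
          also have "\<dots> = ?s * f S \<alpha> + (\<Sum>j\<in>?B. ksign ?S0 j * f (insert j ?S0) (?a0(j := \<alpha> j - 1)))"
          proof -
            have "koszul_dT n f ?S0 ?a0 = ?s * f (insert q ?S0) (?a0(q := ?a0 q - 1)) +
                   (\<Sum>j\<in>?B. ksign ?S0 j * f (insert j ?S0) (?a0(j := ?a0 j - 1)))"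
              unfolding koszul_dT_def B' using qnB by (simp add: sum.insert_remove)
            also have "?a0(q := ?a0 q - 1) = \<alpha>" by auto
            also have "(\<Sum>j\<in>?B. ksign ?S0 j * f (insert j ?S0) (?a0(j := ?a0 j - 1))) =
                       (\<Sum>j\<in>?B. ksign ?S0 j * f (insert j ?S0) (?a0(j := \<alpha> j - 1)))"
              by (intro sum.cong refl) (use qnB in auto)
            finally show ?thesis unfolding ins .
          qed
          finally have eq0: "(\<Sum>j\<in>?B. ksign ?S0 j * f (insert j ?S0) (?a0(j := \<alpha> j - 1))) = - (?s * f S \<alpha>)"
            by (simp add: eq_neg_iff_add_eq_0 add.commute)
          have "koszul_dT n (hom n f) S \<alpha> = (\<Sum>j\<in>?B. - ?s * (ksign ?S0 j * f (insert j ?S0) (?a0(j := \<alpha> j - 1))))"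
            unfolding koszul_dT_def
          proof (intro sum.cong refl)
            fix j assume j: "j \<in> ?B"
            have jq1: "j \<noteq> q" using j qS by auto
            have "q \<le> j" using qmin[of j] BU j by blast
            then have jq: "j \<noteq> q" "q < j" using jq1 by auto
            have e1: "insert j S - {q} = insert j ?S0" using jq by auto
            have e2: "(\<alpha>(j := \<alpha> j - 1))(q := Suc ((\<alpha>(j := \<alpha> j - 1)) q)) = ?a0(j := \<alpha> j - 1)"
              using jq by (auto simp: fun_upd_twist)
            have s1: "ksign S j = (if q < j then -1 else 1) * (ksign ?S0 j :: 'a)"
              using qS by (rule ksign_remove)
            have s2: "ksign (insert j ?S0) q = (if j < q then -1 else 1) * ?s"
              using j by (intro ksign_insert) auto
            show "ksign S j * hom n f (insert j S) (\<alpha>(j := \<alpha> j - 1)) = - ?s * (ksign ?S0 j * f (insert j ?S0) (?a0(j := \<alpha> j - 1)))"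
              unfolding homj[OF j] e1 e2 s1 s2 using jq qS by (simp add: algebra_simps)
          qed
          also have "\<dots> = - ?s * (- (?s * f S \<alpha>))" by (simp only: sum_distrib_left[symmetric] eq0)
          also have "\<dots> = (?s * ?s) * f S \<alpha>" by (simp only: mult.assoc mult_minus_left mult_minus_right minus_minus)
          also have "\<dots> = f S \<alpha>" by (simp add: ksign_sq)
          finally show ?thesis .
        qed
      qed
    qed
  qed
qed



lemma KT_zero: "(\<lambda>S \<alpha>. 0) \<in> KT n k" by (simp add: KT_def)

lemma KT_add:
  assumes "F \<in> KT n k" "G \<in> KT n k"
  shows "(\<lambda>S \<alpha>. F S \<alpha> + G S \<alpha>) \<in> KT n k"
proof -
  have "{(S, \<alpha>). F S \<alpha> + G S \<alpha> \<noteq> 0} \<subseteq> {(S, \<alpha>). F S \<alpha> \<noteq> 0} \<union> {(S, \<alpha>). G S \<alpha> \<noteq> 0}" by auto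
  moreover have "finite ({(S, \<alpha>). F S \<alpha> \<noteq> 0} \<union> {(S, \<alpha>). G S \<alpha> \<noteq> 0})" using assms unfolding KT_def by auto
  ultimately have "finite {(S, \<alpha>). F S \<alpha> + G S \<alpha> \<noteq> 0}" by (rule finite_subset)
  moreover have "\<forall>S \<alpha>. F S \<alpha> + G S \<alpha> \<noteq> 0 \<longrightarrow> S \<subseteq> {..<n} \<and> card S = k \<and> (\<forall>j\<ge>n. \<alpha> j = 0)"
  proof (intro allI impI)
    fix S \<alpha> assume "F S \<alpha> + G S \<alpha> \<noteq> 0"
    then have "F S \<alpha> \<noteq> 0 \<or> G S \<alpha> \<noteq> 0" by auto
    then show "S \<subseteq> {..<n} \<and> card S = k \<and> (\<forall>j\<ge>n. \<alpha> j = 0)" using assms unfolding KT_def by blast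
  qed
  ultimately show ?thesis unfolding KT_def by blast
qed

lemma card_ins_sub:
  fixes S :: "nat set" and n k :: nat
  assumes "insert j S \<subseteq> {..<n}" "card (insert j S) = Suc k" "j \<notin> S"
  shows "S \<subseteq> {..<n}" "card S = k"
proof -
  have "finite S" by (rule finite_subset[OF _ finite_lessThan[of n]]) (use assms(1) in auto)
  then show "S \<subseteq> {..<n}" "card S = k" using assms by auto
qed

lemma dT_nz:
  assumes "koszul_dT n F S \<alpha> \<noteq> 0"
  shows "\<exists>j. j < n \<and> j \<notin> S \<and> 1 \<le> \<alpha> j \<and> F (insert j S) (\<alpha>(j := \<alpha> j - 1)) \<noteq> 0"
proof -
  from assms obtain j where "j \<in> {j\<in>{..<n} - S. 1 \<le> \<alpha> j}" "ksign S j * F (insert j S) (\<alpha>(j := \<alpha> j - 1)) \<noteq> 0"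
    unfolding koszul_dT_def by (rule sum.not_neutral_contains_not_neutral)
  then show ?thesis by auto
qed

lemma dT_KT:
  assumes FK: "F \<in> KT n (Suc k)"
  shows "koszul_dT n F \<in> KT n k"
proof -
  let ?g = "\<lambda>((T, \<beta>), j). (T - {j}, \<beta>(j := Suc (\<beta> j)))"
  have "{(S, \<alpha>). koszul_dT n F S \<alpha> \<noteq> 0} \<subseteq> ?g ` ({(T, \<beta>). F T \<beta> \<noteq> 0} \<times> {..<n})"
  proof safe
    fix S \<alpha> assume "koszul_dT n F S \<alpha> \<noteq> 0"
    then obtain j where j: "j < n" "j \<notin> S" "1 \<le> \<alpha> j" "F (insert j S) (\<alpha>(j := \<alpha> j - 1)) \<noteq> 0"
      using dT_nz by blast
    have "(S, \<alpha>) = ?g ((insert j S, \<alpha>(j := \<alpha> j - 1)), j)" using j by auto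
    then show "(S, \<alpha>) \<in> ?g ` ({(T, \<beta>). F T \<beta> \<noteq> 0} \<times> {..<n})"
      by (rule image_eqI) (use j in auto)
  qed
  moreover have "finite (?g ` ({(T, \<beta>). F T \<beta> \<noteq> 0} \<times> {..<n}))" using FK unfolding KT_def by auto
  ultimately have fin: "finite {(S, \<alpha>). koszul_dT n F S \<alpha> \<noteq> 0}" by (rule finite_subset)
  have "S \<subseteq> {..<n} \<and> card S = k \<and> (\<forall>l\<ge>n. \<alpha> l = 0)" if nz: "koszul_dT n F S \<alpha> \<noteq> 0" for S \<alpha>
  proof -
    obtain j where j: "j < n" "j \<notin> S" "1 \<le> \<alpha> j" "F (insert j S) (\<alpha>(j := \<alpha> j - 1)) \<noteq> 0"
      using dT_nz[OF nz] by blast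
    then have sh: "insert j S \<subseteq> {..<n}" "card (insert j S) = Suc k" "\<forall>l\<ge>n. (\<alpha>(j := \<alpha> j - 1)) l = 0"
      using FK unfolding KT_def by blast+
    have "\<forall>l\<ge>n. \<alpha> l = 0"
    proof (intro allI impI)
      fix l assume "n \<le> l" then show "\<alpha> l = 0" using sh(3) j(1) by (metis fun_upd_other not_le)
    qed
    then show ?thesis using card_ins_sub[OF sh(1,2) j(2)] by blast
  qed
  then show ?thesis using fin unfolding KT_def by blast
qed

lemma DA_nz:
  assumes "DA n a F S \<alpha> \<noteq> 0"
  shows "\<exists>j. j < n \<and> j \<notin> S \<and> F (insert j S) \<alpha> \<noteq> 0"
proof -
  from assms obtain j where "j \<in> {..<n} - S" "ksign S j * a j * F (insert j S) \<alpha> \<noteq> 0"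
    unfolding DA_def koszul_d_def by (rule sum.not_neutral_contains_not_neutral)
  then show ?thesis by auto
qed

lemma DA_KT:
  assumes FK: "F \<in> KT n (Suc k)"
  shows "DA n a F \<in> KT n k"
proof -
  let ?g = "\<lambda>((T, \<beta>), j). (T - {j}, \<beta>)"
  have "{(S, \<alpha>). DA n a F S \<alpha> \<noteq> 0} \<subseteq> ?g ` ({(T, \<beta>). F T \<beta> \<noteq> 0} \<times> {..<n})"
  proof safe
    fix S \<alpha> assume "DA n a F S \<alpha> \<noteq> 0"
    then obtain j where j: "j < n" "j \<notin> S" "F (insert j S) \<alpha> \<noteq> 0"
      using DA_nz by blast
    have "(S, \<alpha>) = ?g ((insert j S, \<alpha>), j)" using j by auto
    then show "(S, \<alpha>) \<in> ?g ` ({(T, \<beta>). F T \<beta> \<noteq> 0} \<times> {..<n})"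
      by (rule image_eqI) (use j in auto)
  qed
  moreover have "finite (?g ` ({(T, \<beta>). F T \<beta> \<noteq> 0} \<times> {..<n}))" using FK unfolding KT_def by auto
  ultimately have fin: "finite {(S, \<alpha>). DA n a F S \<alpha> \<noteq> 0}" by (rule finite_subset)
  have "S \<subseteq> {..<n} \<and> card S = k \<and> (\<forall>l\<ge>n. \<alpha> l = 0)" if nz: "DA n a F S \<alpha> \<noteq> 0" for S \<alpha>
  proof -
    obtain j where j: "j < n" "j \<notin> S" "F (insert j S) \<alpha> \<noteq> 0"
      using DA_nz[OF nz] by blast
    then have sh: "insert j S \<subseteq> {..<n}" "card (insert j S) = Suc k" "\<forall>l\<ge>n. \<alpha> l = 0"
      using FK unfolding KT_def by blast+
    then show ?thesis using card_ins_sub[OF sh(1,2) j(2)] by blast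
  qed
  then show ?thesis using fin unfolding KT_def by blast
qed

lemma hom_nz:
  assumes "hom n f S \<beta> \<noteq> 0"
  shows "\<exists>p. p \<in> S \<and> f (S - {p}) (\<beta>(p := Suc (\<beta> p))) \<noteq> 0"
  using assms unfolding hom_def Let_def by (auto split: if_splits)

lemma hom_KT:
  assumes fK: "f \<in> KT n i"
  shows "hom n f \<in> KT n (Suc i)"
    and "\<And>S \<beta>. hom n f S \<beta> \<noteq> 0 \<Longrightarrow> \<exists>p<n. f (S - {p}) (\<beta>(p := Suc (\<beta> p))) \<noteq> 0"
proof -
  have sh: "f T \<gamma> \<noteq> 0 \<Longrightarrow> T \<subseteq> {..<n} \<and> card T = i \<and> (\<forall>j\<ge>n. \<gamma> j = 0)" for T \<gamma>
    using fK unfolding KT_def by auto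
  have main: "\<exists>p. p < n \<and> p \<in> S \<and> f (S - {p}) (\<beta>(p := Suc (\<beta> p))) \<noteq> 0" if nz: "hom n f S \<beta> \<noteq> 0" for S \<beta>
  proof -
    obtain p where p: "p \<in> S" "f (S - {p}) (\<beta>(p := Suc (\<beta> p))) \<noteq> 0" using hom_nz[OF nz] by blast
    have "p < n"
    proof (rule ccontr)
      assume "\<not> p < n"
      then have "(\<beta>(p := Suc (\<beta> p))) p = 0" using sh[OF p(2)] by (simp only: not_less)
      then show False by simp
    qed
    then show ?thesis using p by blast
  qed
  then show "\<And>S \<beta>. hom n f S \<beta> \<noteq> 0 \<Longrightarrow> \<exists>p<n. f (S - {p}) (\<beta>(p := Suc (\<beta> p))) \<noteq> 0" by blast
  let ?g = "\<lambda>((T, \<gamma>), p). (insert p T, \<gamma>(p := \<gamma> p - 1))"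
  have "{(S, \<beta>). hom n f S \<beta> \<noteq> 0} \<subseteq> ?g ` ({(T, \<gamma>). f T \<gamma> \<noteq> 0} \<times> {..<n})"
  proof safe
    fix S \<beta> assume "hom n f S \<beta> \<noteq> 0"
    then obtain p where p: "p < n" "p \<in> S" "f (S - {p}) (\<beta>(p := Suc (\<beta> p))) \<noteq> 0" using main by blast
    have "(S, \<beta>) = ?g ((S - {p}, \<beta>(p := Suc (\<beta> p))), p)" using p by auto
    then show "(S, \<beta>) \<in> ?g ` ({(T, \<gamma>). f T \<gamma> \<noteq> 0} \<times> {..<n})"
      by (rule image_eqI) (use p in auto)
  qed
  moreover have "finite (?g ` ({(T, \<gamma>). f T \<gamma> \<noteq> 0} \<times> {..<n}))" using fK unfolding KT_def by auto
  ultimately have fin: "finite {(S, \<beta>). hom n f S \<beta> \<noteq> 0}" by (rule finite_subset)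
  have "S \<subseteq> {..<n} \<and> card S = Suc i \<and> (\<forall>l\<ge>n. \<beta> l = 0)" if nz: "hom n f S \<beta> \<noteq> 0" for S \<beta>
  proof -
    obtain p where p: "p < n" "p \<in> S" "f (S - {p}) (\<beta>(p := Suc (\<beta> p))) \<noteq> 0" using main[OF nz] by blast
    have s: "S - {p} \<subseteq> {..<n}" "card (S - {p}) = i" "\<forall>l\<ge>n. (\<beta>(p := Suc (\<beta> p))) l = 0"
      using sh[OF p(3)] by auto
    have finS: "finite S" by (rule finite_subset[OF _ finite_lessThan[of n]]) (use s(1) p(1) in auto)
    have "card S = Suc i" using s(2) finS p(2) by (metis card_Suc_Diff1)
    moreover have "S \<subseteq> {..<n}" using s(1) p(1) by auto
    moreover have "\<forall>l\<ge>n. \<beta> l = 0"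
    proof (intro allI impI)
      fix l assume "n \<le> l" then show "\<beta> l = 0" using s(3) p(1) by (metis fun_upd_other not_le)
    qed
    ultimately show ?thesis by blast
  qed
  then show "hom n f \<in> KT n (Suc i)" using fin unfolding KT_def by blast
qed

lemma approx_Z_iff: "f \<in> approx_Z n a i \<longleftrightarrow> f \<in> KT n i \<and> DA n a f = (\<lambda>S \<alpha>. 0)"
proof
  assume "f \<in> approx_Z n a i"
  then show "f \<in> KT n i \<and> DA n a f = (\<lambda>S \<alpha>. 0)"
    unfolding approx_Z_def koszul_Z_def DA_def by (auto simp: fun_eq_iff)
next
  assume A: "f \<in> KT n i \<and> DA n a f = (\<lambda>S \<alpha>. 0)"
  then have "(\<lambda>S. f S \<alpha>) \<in> koszul_K n i" for \<alpha> unfolding KT_def koszul_K_def by auto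
  moreover have "koszul_d n a (\<lambda>S. f S \<alpha>) = (\<lambda>_. 0)" for \<alpha>
    using A unfolding DA_def by (auto simp: fun_eq_iff)
  ultimately show "f \<in> approx_Z n a i" using A unfolding approx_Z_def koszul_Z_def by auto
qed



lemma mainZ:
  assumes i: "1 \<le> i"
    and HK: "\<And>g. kcyc n a {} (Suc i) g \<Longrightarrow> kbd n a {} (Suc i) g"
  shows "f \<in> approx_Z n a i \<Longrightarrow> koszul_dT n f = (\<lambda>S \<alpha>. 0) \<Longrightarrow> (\<forall>S \<alpha>. f S \<alpha> \<noteq> 0 \<longrightarrow> deg n \<alpha> \<le> m)
         \<Longrightarrow> \<exists>g\<in>approx_Z n a (Suc i). koszul_dT n g = f"
proof (induction m arbitrary: f)
  case 0
  have fK: "f \<in> KT n i" using "0.prems"(1) approx_Z_iff by blast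
  have F0: "hom n f = (\<lambda>S \<beta>. 0)"
  proof (intro ext)
    fix S \<beta> show "hom n f S \<beta> = 0"
    proof (rule ccontr)
      assume "hom n f S \<beta> \<noteq> 0"
      then obtain p where "p < n" "f (S - {p}) (\<beta>(p := Suc (\<beta> p))) \<noteq> 0" using hom_KT(2)[OF fK] by blast
      then have "deg n (\<beta>(p := Suc (\<beta> p))) \<le> 0" using "0.prems"(3) by blast
      then show False using deg_upd[OF \<open>p < n\<close>] by simp
    qed
  qed
  have "f = (\<lambda>S \<alpha>. 0)"
    using hom_eq[OF fK i "0.prems"(2)] unfolding F0 dT_zero by (auto simp: fun_eq_iff)
  then show ?case
    by (intro bexI[of _ "\<lambda>S \<alpha>. 0"]) (simp_all add: dT_zero approx_Z_iff KT_zero DA_zero)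
next
  case (Suc m)
  have fK: "f \<in> KT n i" and fA: "DA n a f = (\<lambda>S \<alpha>. 0)" using Suc.prems(1) approx_Z_iff by blast+
  define F where "F = hom n f"
  have FK: "F \<in> KT n (Suc i)" unfolding F_def using hom_KT(1)[OF fK] .
  have dF: "koszul_dT n F = f" unfolding F_def using hom_eq[OF fK i Suc.prems(2)] by (auto simp: fun_eq_iff)
  have Fb: "F S \<beta> \<noteq> 0 \<Longrightarrow> deg n \<beta> \<le> m" for S \<beta>
  proof -
    assume "F S \<beta> \<noteq> 0"
    then obtain p where "p < n" "f (S - {p}) (\<beta>(p := Suc (\<beta> p))) \<noteq> 0" using hom_KT(2)[OF fK] unfolding F_def by blast
    then have "deg n (\<beta>(p := Suc (\<beta> p))) \<le> Suc m" using Suc.prems(3) by blast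
    then show ?thesis using deg_upd[OF \<open>p < n\<close>] by simp
  qed
  define b where "b = DA n a F"
  have bZ: "b \<in> approx_Z n a i" unfolding approx_Z_iff b_def using DA_KT[OF FK] DA_DA by blast
  have "koszul_dT n b = (\<lambda>S \<alpha>. 0)"
  proof (intro ext)
    fix S \<alpha>
    have "DA n a (koszul_dT n F) S \<alpha> = - koszul_dT n (DA n a F) S \<alpha>" by (subst DA_dT) (rule refl)
    then show "koszul_dT n b S \<alpha> = 0" unfolding b_def dF fA by simp
  qed
  moreover have "\<forall>S \<alpha>. b S \<alpha> \<noteq> 0 \<longrightarrow> deg n \<alpha> \<le> m"
  proof (intro allI impI)
    fix S \<alpha> assume "b S \<alpha> \<noteq> 0"
    then obtain j where "F (insert j S) \<alpha> \<noteq> 0" using DA_nz unfolding b_def by blast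
    then show "deg n \<alpha> \<le> m" by (rule Fb)
  qed
  ultimately obtain g' where g': "g' \<in> approx_Z n a (Suc i)" "koszul_dT n g' = b"
    using Suc.IH[OF bZ] by blast
  have g'K: "g' \<in> KT n (Suc i)" and g'A: "DA n a g' = (\<lambda>S \<alpha>. 0)" using g'(1) approx_Z_iff by blast+
  have exH: "\<exists>h. h \<in> koszul_K n (Suc (Suc i)) \<and> (\<forall>S. koszul_d n a h S = g' S \<alpha>)" for \<alpha>
  proof -
    have "kcyc n a {} (Suc i) (\<lambda>S. g' S \<alpha>)"
      unfolding kcyc_def
    proof
      show "(\<lambda>S. g' S \<alpha>) \<in> koszul_K n (Suc i)" using g'K unfolding KT_def koszul_K_def by auto
      have "koszul_d n a (\<lambda>S. g' S \<alpha>) S = 0" for S using fun_cong[OF fun_cong[OF g'A, of S], of \<alpha>] unfolding DA_def by simp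
      then show "\<forall>S. koszul_d n a (\<lambda>S. g' S \<alpha>) S \<in> ideal_gen {}" by (simp add: ideal_gen_empty)
    qed
    then obtain h where "h \<in> koszul_K n (Suc (Suc i))" "\<forall>S. g' S \<alpha> - koszul_d n a h S \<in> ideal_gen {}"
      using HK unfolding kbd_def by blast
    then show ?thesis by (intro exI[of _ h]) (simp add: ideal_gen_empty)
  qed
  define H where "H \<alpha> = (SOME h. h \<in> koszul_K n (Suc (Suc i)) \<and> (\<forall>S. koszul_d n a h S = g' S \<alpha>))" for \<alpha>
  have H: "H \<alpha> \<in> koszul_K n (Suc (Suc i))" "koszul_d n a (H \<alpha>) S = g' S \<alpha>" for \<alpha> S
    unfolding H_def using someI_ex[OF exH[of \<alpha>]] by blast+
  define G where "G S \<alpha> = (if \<exists>T. g' T \<alpha> \<noteq> 0 then H \<alpha> S else 0)" for S \<alpha>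
  have GK: "G \<in> KT n (Suc (Suc i))"
  proof -
    have "{(S, \<alpha>). G S \<alpha> \<noteq> 0} \<subseteq> Pow {..<n} \<times> (snd ` {(T, \<alpha>). g' T \<alpha> \<noteq> 0})"
    proof safe
      fix S \<alpha> x assume "G S \<alpha> \<noteq> 0" "x \<in> S"
      then show "x < n" using H(1)[of \<alpha>] unfolding G_def koszul_K_def by (auto split: if_splits)
    next
      fix S \<alpha> assume "G S \<alpha> \<noteq> 0"
      then obtain T where "g' T \<alpha> \<noteq> 0" unfolding G_def by (auto split: if_splits)
      then show "\<alpha> \<in> snd ` {(T, \<alpha>). g' T \<alpha> \<noteq> 0}" by (intro image_eqI[of _ _ "(T, \<alpha>)"]) auto
    qed
    moreover have "finite (Pow {..<n} \<times> (snd ` {(T, \<alpha>). g' T \<alpha> \<noteq> 0}))" using g'K unfolding KT_def by auto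
    ultimately have fin: "finite {(S, \<alpha>). G S \<alpha> \<noteq> 0}" by (rule finite_subset)
    have "S \<subseteq> {..<n} \<and> card S = Suc (Suc i) \<and> (\<forall>j\<ge>n. \<alpha> j = 0)" if nz: "G S \<alpha> \<noteq> 0" for S \<alpha>
    proof -
      obtain T where T: "g' T \<alpha> \<noteq> 0" "H \<alpha> S \<noteq> 0" using nz unfolding G_def by (auto split: if_splits)
      then show ?thesis using H(1)[of \<alpha>] g'K unfolding koszul_K_def KT_def by blast
    qed
    then show ?thesis using fin unfolding KT_def by blast
  qed
  have DG: "DA n a G = g'"
  proof (intro ext)
    fix S \<alpha>
    show "DA n a G S \<alpha> = g' S \<alpha>"
    proof (cases "\<exists>T. g' T \<alpha> \<noteq> 0")
      case True
      then have "(\<lambda>T. G T \<alpha>) = H \<alpha>" unfolding G_def by auto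
      then show ?thesis unfolding DA_def using H(2) by simp
    next
      case False
      then have "(\<lambda>T. G T \<alpha>) = (\<lambda>T. 0)" unfolding G_def by auto
      then show ?thesis unfolding DA_def using False kd_zero by simp
    qed
  qed
  define gg where "gg = (\<lambda>S \<alpha>. F S \<alpha> + koszul_dT n G S \<alpha>)"
  have "gg \<in> KT n (Suc i)" unfolding gg_def by (rule KT_add[OF FK dT_KT[OF GK]])
  moreover have "DA n a gg = (\<lambda>S \<alpha>. 0)"
    unfolding gg_def DA_add DA_dT DG g'(2) b_def by simp
  ultimately have "gg \<in> approx_Z n a (Suc i)" using approx_Z_iff by blast
  moreover have "koszul_dT n gg = f" unfolding gg_def dT_add dT_dT dF by simp
  ultimately show ?case by blast
qed

lemma enat_le_Sup_ex:
  assumes "enat k \<le> Sup X" "1 \<le> k"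
  shows "\<exists>x\<in>X. enat k \<le> x"
proof (rule ccontr)
  assume A: "\<not> (\<exists>x\<in>X. enat k \<le> x)"
  have "x \<le> enat (k - 1)" if "x \<in> X" for x
  proof -
    have "x < enat k" using A that by auto
    then show ?thesis
    proof (cases x)
      case (enat y)
      then show ?thesis using \<open>x < enat k\<close> by simp
    qed simp
  qed
  then have "Sup X \<le> enat (k - 1)" by (simp add: Sup_le_iff)
  then have "enat k \<le> enat (k - 1)" using assms(1) by (rule order_trans[rotated])
  then show False using assms(2) by simp
qed

theorem mainTheorem7:
  fixes G :: "nat \<Rightarrow> 'a::comm_ring_1 set" and a :: "nat \<Rightarrow> 'a" and n :: nat
  assumes "noetherian_ring TYPE('a)"
    and "nat_graded G"
    and "radical (ideal_gen (a ` {..<n})) = radical (irrelevant_ideal G)"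
    and "grade (irrelevant_ideal G) \<ge> 1"
  shows "(\<forall>i. 1 \<le> i \<and> enat n \<le> enat i + grade (irrelevant_ideal G) \<longrightarrow> approx_H_zero n a i)
       \<and> (2 \<le> n \<and> enat n - 1 \<le> grade (irrelevant_ideal G) \<longrightarrow> (\<forall>i\<ge>1. approx_H_zero n a i))"
proof -
  let ?m = "irrelevant_ideal G"
  let ?I = "ideal_gen (a ` {..<n})"
  have part1: "approx_H_zero n a i" if i: "1 \<le> i" and le: "enat n \<le> enat i + grade ?m" for i
  proof -
    have "\<exists>xs. regmod {} xs \<and> set xs \<subseteq> ?m \<and> n \<le> i + length xs"
    proof (cases "n \<le> i")
      case True
      then show ?thesis by (intro exI[of _ "[]"]) (simp add: regmod_def)
    next
      case False
      have "enat (n - i) \<le> grade ?m"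
      proof (cases "grade ?m")
        case (enat g)
        then show ?thesis using le by simp
      next
        case infinity
        then show ?thesis by simp
      qed
      then have ge: "enat (n - i) \<le> Sup {enat (length xs) | xs. set xs \<subseteq> ?m \<and> regular_seq xs}"
        unfolding grade_def .
      have k1: "1 \<le> n - i" using False by simp
      obtain x where x: "x \<in> {enat (length xs) | xs. set xs \<subseteq> ?m \<and> regular_seq xs}" "enat (n - i) \<le> x"
        using enat_le_Sup_ex[OF ge k1] by blast
      then obtain xs where xs: "x = enat (length xs)" "set xs \<subseteq> ?m" "regular_seq xs" by blast
      have "regmod {} xs" using xs(3) unfolding regular_seq_def regmod_def by simp
      then show ?thesis using xs x(2) by (intro exI[of _ xs]) auto
    qed
    then obtain xs where xs: "regmod {} xs" "set xs \<subseteq> ?m" "n \<le> i + length xs" by blast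
    have pw: "\<forall>x\<in>set xs. \<exists>k. x ^ k \<in> ?I"
    proof
      fix x assume "x \<in> set xs"
      then have "x \<in> radical ?m" using xs(2) unfolding radical_def by (intro CollectI exI[of _ 1]) auto
      then show "\<exists>k. x ^ k \<in> ?I" using assms(3) unfolding radical_def by auto
    qed
    have HK: "kcyc n a {} (Suc i) g \<Longrightarrow> kbd n a {} (Suc i) g" for g
      using kvan[OF xs(1) pw] xs(3) by simp
    show ?thesis unfolding approx_H_zero_def
    proof (intro ballI impI)
      fix f assume fZ: "f \<in> approx_Z n a i" and df: "koszul_dT n f = (\<lambda>S \<alpha>. 0)"
      let ?sp = "{(S, \<alpha>). f S \<alpha> \<noteq> 0}"
      have fin: "finite ?sp" using fZ unfolding approx_Z_def KT_def by auto
      have "\<forall>S \<alpha>. f S \<alpha> \<noteq> 0 \<longrightarrow> deg n \<alpha> \<le> (\<Sum>p\<in>?sp. deg n (snd p))"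
      proof (intro allI impI)
        fix S \<alpha> assume "f S \<alpha> \<noteq> 0"
        then have "(S, \<alpha>) \<in> ?sp" by simp
        from member_le_sum[OF this _ fin, of "\<lambda>p. deg n (snd p)"] show "deg n \<alpha> \<le> (\<Sum>p\<in>?sp. deg n (snd p))" by simp
      qed
      then show "\<exists>g\<in>approx_Z n a (Suc i). koszul_dT n g = f"
        using mainZ[OF i HK fZ df] by blast
    qed
  qed
  have part2: "\<forall>i\<ge>1. approx_H_zero n a i" if "2 \<le> n" "enat n - 1 \<le> grade ?m"
  proof (intro allI impI)
    fix i :: nat assume i: "1 \<le> i"
    have "enat n - 1 = enat (n - 1)" by (simp add: one_enat_def)
    then have "enat n \<le> enat i + grade ?m"
      using that(2) i by (cases "grade ?m") auto
    then show "approx_H_zero n a i" using part1 i by blast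
  qed
  show ?thesis using part1 part2 by blast
qed


end
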